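(* Let $A$ be a commutative unital $\mathbb{K}$-algebra. Then $(T^+(A),\bar\bullet^\ell,P_A)$, together with the unital algebra morphism $i_A:A\to T^+(A)$, $i_A(a)=a\otimes1_{\mathbb{K}}$, is the free unital commutative $TD$-algebra over $A$: for every unital commutative $TD$-algebra $(B,P)$ and every unital algebra morphism $\phi:A\to B$ there exists a unique $TD$-algebra morphism $\tilde\phi:T^+(A)\to B$ with $\tilde\phi\circ i_A=\phi$. (It is given by $\tilde\phi(a_1\otimes a_2\otimes\cdots\otimes a_n)=\phi(a_1)\,P\bigl(\tilde\phi(a_2\otimes\cdots\otimes a_n)\bigr)$.)
   Context: $\mathbb{K}$ is a field of characteristic $0$, $A$ has product $[a;b]$ and unit $1_A$. $T(A)=\bigoplus_{n\ge0}A^{\otimes n}$ with $A^{\otimes0}=\mathbb{K}1_{\mathbb{K}}$; $a\otimes1_{\mathbb{K}}$ is identified with $a$. The left-shift shuffle $\bullet^\ell$ is the bilinear product on $T(A)$ with $k1_{\mathbb{K}}\bullet^\ell U=kU=U\bullet^\ell k1_{\mathbb{K}}$ and, for $a,b\in A$, $U,V\in T(A)$, $(a\otimes U)\bullet^\ell(b\otimes V)=a\otimes\bigl(U\bullet^\ell(b\otimes V)\bigr)+b\otimes\bigl((a\otimes U)\bullet^\ell V\bigr)-[a;b]\otimes1_A\otimes(U\bullet^\ell V)$. $T^+(A):=A\otimes T(A)=\bigoplus_{n\ge1}A^{\otimes n}$ with product $(a\otimes U)\,\bar\bullet^\ell\,(b\otimes V):=[a;b]\otimes(U\bullet^\ell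 V)$ and unit $1_A\otimes1_{\mathbb{K}}$. $P_A:T^+(A)\to T^+(A)$ is the linear map $P_A(a_1\otimes\cdots\otimes a_n)=1_A\otimes a_1\otimes\cdots\otimes a_n$. A $TD$-algebra is a pair $(B,P)$, $B$ a unital associative algebra, $P:B\to B$ linear with $P(x)P(y)=P\bigl(P(x)y+xP(y)\bigr)-P\bigl(x\,P(1_B)\,y\bigr)$ for all $x,y$. A $TD$-algebra morphism $(B_1,P_1)\to(B_2,P_2)$ is a unital algebra homomorphism $f$ with $fP_1=P_2f$. *)

theory Defs
  imports Main "HOL.Vector_Spaces" "HOL-Library.Poly_Mapping"
begin

text \<open>Scalars: a field 'k of characteristic 0.  A commutative unital
K-algebra A is a type 'a of class comm_ring_1 with a scalar multiplication sa making it a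
K-vector space compatible with the product.  Tensor words a1 (x) ... (x) an are lists of
elements of 'a.  The free K-module on words is 'a list =>0 'k (finitely supported);
T^+(A) is represented by the free K-module on nonempty words, encoded as pairs (a1,[a2..an]),
modulo the subspace tp_rel sa of multilinearity relations.  Operations are defined on
representatives (on pure tensors and extended bilinearly).\<close>

definition kalg :: "('k::field \<Rightarrow> 'a::comm_ring_1 \<Rightarrow> 'a) \<Rightarrow> bool" where
  "kalg s \<longleftrightarrow> Vector_Spaces.vector_space s \<and> (\<forall>c x y. s c (x * y) = s c x * y)"

definition ualg_hom :: "('k::field \<Rightarrow> 'a::comm_ring_1 \<Rightarrow> 'a) \<Rightarrow> ('k \<Rightarrow> 'b::comm_ring_1 \<Rightarrow> 'b)
    \<Rightarrow> ('a \<Rightarrow> 'b) \<Rightarrow> bool" where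
  "ualg_hom s1 s2 f \<longleftrightarrow> Vector_Spaces.linear s1 s2 f \<and> f 1 = 1 \<and> (\<forall>x y. f (x * y) = f x * f y)"

definition td_alg :: "('k::field \<Rightarrow> 'b::comm_ring_1 \<Rightarrow> 'b) \<Rightarrow> ('b \<Rightarrow> 'b) \<Rightarrow> bool" where
  "td_alg s P \<longleftrightarrow> Vector_Spaces.linear s s P \<and>
     (\<forall>x y. P x * P y = P (P x * y + x * P y) - P (x * P 1 * y))"

definition pm_scale :: "'k::field \<Rightarrow> ('w \<Rightarrow>\<^sub>0 'k) \<Rightarrow> ('w \<Rightarrow>\<^sub>0 'k)" where
  "pm_scale c x = Poly_Mapping.map (\<lambda>t. c * t) x"

definition lcons :: "'a \<Rightarrow> ('a list \<Rightarrow>\<^sub>0 'k::field) \<Rightarrow> ('a list \<Rightarrow>\<^sub>0 'k)" where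
  "lcons a x = (\<Sum>w\<in>Poly_Mapping.keys x. Poly_Mapping.single (a # w) (Poly_Mapping.lookup x w))"

fun lsh :: "'a::comm_ring_1 list \<Rightarrow> 'a list \<Rightarrow> ('a list \<Rightarrow>\<^sub>0 'k::field)" where
  "lsh [] V = Poly_Mapping.single V 1"
| "lsh (a # U) [] = Poly_Mapping.single (a # U) 1"
| "lsh (a # U) (b # V) =
     lcons a (lsh U (b # V)) + lcons b (lsh (a # U) V) - lcons (a * b) (lcons 1 (lsh U V))"

definition tcons :: "'a \<Rightarrow> ('a list \<Rightarrow>\<^sub>0 'k::field) \<Rightarrow> ('a \<times> 'a list \<Rightarrow>\<^sub>0 'k)" where
  "tcons a x = (\<Sum>w\<in>Poly_Mapping.keys x. Poly_Mapping.single (a, w) (Poly_Mapping.lookup x w))"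

definition tp_mult_w :: "'a::comm_ring_1 \<times> 'a list \<Rightarrow> 'a \<times> 'a list \<Rightarrow> ('a \<times> 'a list \<Rightarrow>\<^sub>0 'k::field)" where
  "tp_mult_w u v = tcons (fst u * fst v) (lsh (snd u) (snd v))"

definition tp_mult :: "('a::comm_ring_1 \<times> 'a list \<Rightarrow>\<^sub>0 'k::field) \<Rightarrow> ('a \<times> 'a list \<Rightarrow>\<^sub>0 'k)
    \<Rightarrow> ('a \<times> 'a list \<Rightarrow>\<^sub>0 'k)" where
  "tp_mult x y = (\<Sum>u\<in>Poly_Mapping.keys x. \<Sum>v\<in>Poly_Mapping.keys y. pm_scale (Poly_Mapping.lookup x u * Poly_Mapping.lookup y v) (tp_mult_w u v))"

definition tp_one :: "('a::comm_ring_1 \<times> 'a list \<Rightarrow>\<^sub>0 'k::field)" where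
  "tp_one = Poly_Mapping.single (1, []) 1"

definition PA :: "('a::comm_ring_1 \<times> 'a list \<Rightarrow>\<^sub>0 'k::field) \<Rightarrow> ('a \<times> 'a list \<Rightarrow>\<^sub>0 'k)" where
  "PA x = (\<Sum>u\<in>Poly_Mapping.keys x. Poly_Mapping.single (1, fst u # snd u) (Poly_Mapping.lookup x u))"

definition iA :: "'a \<Rightarrow> ('a \<times> 'a list \<Rightarrow>\<^sub>0 'k::field)" where
  "iA a = Poly_Mapping.single (a, []) 1"

definition tword :: "'a list \<Rightarrow> ('a \<times> 'a list \<Rightarrow>\<^sub>0 'k::field)" where
  "tword w = Poly_Mapping.single (hd w, tl w) 1"

inductive_set tp_rel :: "('k::field \<Rightarrow> 'a \<Rightarrow> 'a::ab_group_add) \<Rightarrow> ('a \<times> 'a list \<Rightarrow>\<^sub>0 'k) set"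
  for s where
  zero: "0 \<in> tp_rel s"
| add: "x \<in> tp_rel s \<Longrightarrow> y \<in> tp_rel s \<Longrightarrow> x + y \<in> tp_rel s"
| scale: "x \<in> tp_rel s \<Longrightarrow> pm_scale c x \<in> tp_rel s"
| gen_add: "tword (xs @ (a + b) # ys) - tword (xs @ a # ys) - tword (xs @ b # ys) \<in> tp_rel s"
| gen_scale: "tword (xs @ s c a # ys) - pm_scale c (tword (xs @ a # ys)) \<in> tp_rel s"

definition tp_eq :: "('k::field \<Rightarrow> 'a \<Rightarrow> 'a::ab_group_add) \<Rightarrow> ('a \<times> 'a list \<Rightarrow>\<^sub>0 'k)
    \<Rightarrow> ('a \<times> 'a list \<Rightarrow>\<^sub>0 'k) \<Rightarrow> bool" where
  "tp_eq s x y \<longleftrightarrow> x - y \<in> tp_rel s"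

text \<open>(T^+(A), bar-bullet, P_A) is a unital commutative TD-algebra and i_A a unital algebra
morphism (all modulo tp_rel, which is shown to be an ideal stable under P_A).\<close>
definition tp_is_comm_td :: "('k::field \<Rightarrow> 'a::comm_ring_1 \<Rightarrow> 'a) \<Rightarrow> bool" where
  "tp_is_comm_td s \<longleftrightarrow>
     (\<forall>(x :: 'a \<times> 'a list \<Rightarrow>\<^sub>0 'k) y. x \<in> tp_rel s \<longrightarrow> tp_mult x y \<in> tp_rel s) \<and>
     (\<forall>(x :: 'a \<times> 'a list \<Rightarrow>\<^sub>0 'k). x \<in> tp_rel s \<longrightarrow> PA x \<in> tp_rel s) \<and>
     (\<forall>(x :: 'a \<times> 'a list \<Rightarrow>\<^sub>0 'k) y z. tp_eq s (tp_mult (tp_mult x y) z) (tp_mult x (tp_mult y z))) \<and>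
     (\<forall>(x :: 'a \<times> 'a list \<Rightarrow>\<^sub>0 'k) y. tp_eq s (tp_mult x y) (tp_mult y x)) \<and>
     (\<forall>(x :: 'a \<times> 'a list \<Rightarrow>\<^sub>0 'k). tp_eq s (tp_mult tp_one x) x) \<and>
     (\<forall>(x :: 'a \<times> 'a list \<Rightarrow>\<^sub>0 'k) y. tp_eq s (tp_mult (PA x) (PA y))
              (PA (tp_mult (PA x) y + tp_mult x (PA y)) - PA (tp_mult (tp_mult x (PA tp_one)) y))) \<and>
     (\<forall>a b. tp_eq s (iA (a + b) :: 'a \<times> 'a list \<Rightarrow>\<^sub>0 'k) (iA a + iA b)) \<and>
     (\<forall>c a. tp_eq s (iA (s c a)) (pm_scale c (iA a))) \<and>
     (\<forall>a b. tp_eq s (iA (a * b) :: 'a \<times> 'a list \<Rightarrow>\<^sub>0 'k) (tp_mult (iA a) (iA b))) \<and>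
     (iA 1 :: 'a \<times> 'a list \<Rightarrow>\<^sub>0 'k) = tp_one"

text \<open>psi : T^+(A) -> B is a TD-algebra morphism (given on representatives: it is
K-linear and vanishes on tp_rel, i.e. it is a linear map on the quotient).\<close>
definition tp_td_hom :: "('k::field \<Rightarrow> 'a::comm_ring_1 \<Rightarrow> 'a) \<Rightarrow> ('k \<Rightarrow> 'b::comm_ring_1 \<Rightarrow> 'b)
    \<Rightarrow> ('b \<Rightarrow> 'b) \<Rightarrow> (('a \<times> 'a list \<Rightarrow>\<^sub>0 'k) \<Rightarrow> 'b) \<Rightarrow> bool" where
  "tp_td_hom sa sb P \<psi> \<longleftrightarrow>
     (\<forall>x y. \<psi> (x + y) = \<psi> x + \<psi> y) \<and>
     (\<forall>c x. \<psi> (pm_scale c x) = sb c (\<psi> x)) \<and>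
     (\<forall>x. x \<in> tp_rel sa \<longrightarrow> \<psi> x = 0) \<and>
     \<psi> tp_one = 1 \<and>
     (\<forall>x y. \<psi> (tp_mult x y) = \<psi> x * \<psi> y) \<and>
     (\<forall>x. \<psi> (PA x) = P (\<psi> x))"

end

theory Submission
  imports Defs
begin


abbreviation "lk \<equiv> Poly_Mapping.lookup"
abbreviation "ks \<equiv> Poly_Mapping.keys"
abbreviation "sg \<equiv> Poly_Mapping.single"

lemma lookup_pm_scale[simp]: "Poly_Mapping.lookup (pm_scale c x) k = c * Poly_Mapping.lookup x k"
  unfolding pm_scale_def by transfer (simp add: when_def)

lemma pm_induct[case_names zero add]:
  assumes "P 0" "\<And>u c x. P x \<Longrightarrow> P (Poly_Mapping.single u c + x)"
  shows "P x"
proof (induction x rule: update_induct)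
  case const then show ?case using assms(1) .
next
  case (update f a b)
  have "Poly_Mapping.update a b f = Poly_Mapping.single a b + f"
    using update(1) by (intro poly_mapping_eqI) (auto simp: lookup_update lookup_add lookup_single when_def in_keys_iff)
  then show ?case using assms(2) update(3) by simp
qed

definition lext :: "('w \<Rightarrow> 'k::zero \<Rightarrow> 'm::comm_monoid_add) \<Rightarrow> ('w \<Rightarrow>\<^sub>0 'k) \<Rightarrow> 'm" where
  "lext g x = (\<Sum>u\<in>Poly_Mapping.keys x. g u (Poly_Mapping.lookup x u))"

definition additive2 :: "('w \<Rightarrow> 'k::comm_monoid_add \<Rightarrow> 'm::comm_monoid_add) \<Rightarrow> bool" where
  "additive2 g \<longleftrightarrow> (\<forall>u c d. g u (c + d) = g u c + g u d)"

lemma additive2_zero: "additive2 (g :: 'w \<Rightarrow> 'k::comm_monoid_add \<Rightarrow> 'm::cancel_comm_monoid_add) \<Longrightarrow> g u 0 = 0"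
  unfolding additive2_def by (metis add.right_neutral add_cancel_right_right)

lemma lext_zero[simp]: "lext g 0 = 0"
  by (simp add: lext_def)

lemma lext_add:
  fixes g :: "'w \<Rightarrow> 'k::comm_monoid_add \<Rightarrow> 'm::cancel_comm_monoid_add"
  assumes "additive2 g"
  shows "lext g (x + y) = lext g x + lext g y"
proof -
  have z: "g u 0 = 0" for u using additive2_zero[OF assms] .
  have "lext g (x + y) = (\<Sum>u\<in>ks x \<union> ks y. g u (lk  (x+y) u))"
    unfolding lext_def
    by (rule sum.mono_neutral_left) (auto simp: keys_add[THEN subsetD] in_keys_iff z lookup_add)
  also have "\<dots> = (\<Sum>u\<in>ks x \<union> ks y. g u (lk  x u)) + (\<Sum>u\<in>ks x \<union> ks y. g u (lk  y u))"
    using assms unfolding additive2_def by (simp add: lookup_add sum.distrib)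
  also have "\<dots> = lext g x + lext g y"
  proof -
    have "lext g x = (\<Sum>u\<in>ks x \<union> ks y. g u (lk x u))" unfolding lext_def
      by (rule sum.mono_neutral_left) (auto simp: in_keys_iff z)
    moreover have "lext g y = (\<Sum>u\<in>ks x \<union> ks y. g u (lk y u))" unfolding lext_def
      by (rule sum.mono_neutral_left) (auto simp: in_keys_iff z)
    ultimately show ?thesis by simp
  qed
  finally show ?thesis .
qed

lemma lext_single:
  fixes g :: "'w \<Rightarrow> 'k::comm_monoid_add \<Rightarrow> 'm::cancel_comm_monoid_add"
  assumes "additive2 g"
  shows "lext g (Poly_Mapping.single u c) = g u c"
  using additive2_zero[OF assms] by (simp add: lext_def)

lemma lext_uminus_fun: "lext (\<lambda>u c. - (g u c)) x = - lext g (x::'w \<Rightarrow>\<^sub>0 'k::zero) " for g :: "_ \<Rightarrow> _ \<Rightarrow> 'm::ab_group_add"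
  by (simp add: lext_def sum_negf)

lemma lext_add_fun: "lext (\<lambda>u c. g u c + h u c) x = lext g x + lext h x"
  by (simp add: lext_def sum.distrib)

definition addh :: "('x::ab_group_add \<Rightarrow> 'y::ab_group_add) \<Rightarrow> bool" where
  "addh f \<longleftrightarrow> (\<forall>x y. f (x + y) = f x + f y)"

lemma addhD: "addh f \<Longrightarrow> f (x + y) = f x + f y" by (simp add: addh_def)
lemma addh_zero: "addh f \<Longrightarrow> f 0 = 0"
proof -
  assume "addh f" then have "f (0 + 0) = f 0 + f 0" by (rule addhD)
  then show ?thesis by simp
qed
lemma addh_uminus: "addh f \<Longrightarrow> f (- x) = - f x"
proof -
  assume a: "addh f" then have "f (- x + x) = f (- x) + f x" by (rule addhD)
  then show ?thesis using addh_zero[OF a] by (simp add: eq_neg_iff_add_eq_0)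
qed
lemma addh_diff: "addh f \<Longrightarrow> f (x - y) = f x - f y"
  using addhD[of f x "- y"] addh_uminus[of f y] by simp

lemma lin_eq:
  fixes f g :: "('w \<Rightarrow>\<^sub>0 'k::ab_group_add) \<Rightarrow> 'y::ab_group_add"
  assumes "addh f" "addh g" "\<And>u c. f (sg u c) = g (sg u c)"
  shows "f x = g x"
proof (induction x rule: pm_induct)
  case zero
  show ?case using addh_zero[OF assms(1)] addh_zero[OF assms(2)] by simp
next
  case (add u c x)
  have "f (sg u c + x) = f (sg u c) + f x" using assms(1) by (rule addhD)
  moreover have "g (sg u c + x) = g (sg u c) + g x" using assms(2) by (rule addhD)
  ultimately show ?case by (simp only: add assms(3))
qed


lemma pm_scale_add_left: "pm_scale (c + d) x = pm_scale c x + pm_scale d x"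
  by (rule poly_mapping_eqI) (simp add: lookup_add algebra_simps)
lemma pm_scale_add_right: "pm_scale c (x + y) = pm_scale c x + pm_scale c y"
  by (rule poly_mapping_eqI) (simp add: lookup_add algebra_simps)
lemma pm_scale_diff_right: "pm_scale c (x - y) = pm_scale c x - pm_scale c y"
  by (rule poly_mapping_eqI) (simp add: lookup_minus algebra_simps)
lemma pm_scale_uminus_right: "pm_scale c (- y) = - pm_scale c y"
  by (rule poly_mapping_eqI) (simp add: algebra_simps)
lemma pm_scale_single[simp]: "pm_scale c (sg u d) = sg u (c * d)"
  by (rule poly_mapping_eqI) (simp add: lookup_single when_def)
lemma pm_scale_scale[simp]: "pm_scale c (pm_scale d x) = pm_scale (c * d) x"
  by (rule poly_mapping_eqI) (simp add: algebra_simps)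
lemma pm_scale_one[simp]: "pm_scale 1 x = x"
  by (rule poly_mapping_eqI) simp
lemma pm_scale_zero_left[simp]: "pm_scale 0 x = 0"
  by (rule poly_mapping_eqI) simp
lemma pm_scale_zero_right[simp]: "pm_scale c 0 = 0"
  by (rule poly_mapping_eqI) simp
lemma pm_scale_sum: "pm_scale c (sum f A) = (\<Sum>a\<in>A. pm_scale c (f a))"
  by (rule poly_mapping_eqI) (simp add: lookup_sum sum_distrib_left)

lemma addh_pm_scale: "addh (pm_scale c)"
  by (simp add: addh_def pm_scale_add_right)

subsection \<open>linear extension of a map on basis elements\<close>

definition uext :: "('w \<Rightarrow> ('v \<Rightarrow>\<^sub>0 'k::field)) \<Rightarrow> ('w \<Rightarrow>\<^sub>0 'k) \<Rightarrow> ('v \<Rightarrow>\<^sub>0 'k)" where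
  "uext h x = lext (\<lambda>u c. pm_scale c (h u)) x"

lemma additive2_uext: "additive2 (\<lambda>u c. pm_scale c (h u))"
  by (simp add: additive2_def pm_scale_add_left)

lemma uext_add: "uext h (x + y) = uext h x + uext h y"
  unfolding uext_def by (rule lext_add[OF additive2_uext])

lemma addh_uext: "addh (uext h)"
  by (simp add: addh_def uext_add)

lemma uext_single[simp]: "uext h (sg u c) = pm_scale c (h u)"
  unfolding uext_def by (rule lext_single[OF additive2_uext])

lemma uext_zero[simp]: "uext h 0 = 0"
  by (simp add: uext_def)

lemma uext_diff: "uext h (x - y) = uext h x - uext h y"
  by (rule addh_diff[OF addh_uext])

lemma uext_uminus: "uext h (- y) = - uext h y"
  by (rule addh_uminus[OF addh_uext])

lemma uext_scale: "uext h (pm_scale c x) = pm_scale c (uext h x)"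
proof (rule lin_eq[where f="\<lambda>x. uext h (pm_scale c x)" and g="\<lambda>x. pm_scale c (uext h x)"])
  show "addh (\<lambda>x. uext h (pm_scale c x))" by (simp add: addh_def pm_scale_add_right uext_add)
  show "addh (\<lambda>x. pm_scale c (uext h x))" by (simp add: addh_def pm_scale_add_right uext_add)
qed simp

lemma uext_fun_add: "uext (\<lambda>u. f u + g u) x = uext f x + uext g x"
  unfolding uext_def by (simp add: pm_scale_add_right lext_add_fun)

lemma uext_fun_uminus: "uext (\<lambda>u. - f u) x = - uext f x"
  unfolding uext_def by (simp add: pm_scale_uminus_right lext_uminus_fun)

lemma uext_fun_diff: "uext (\<lambda>u. f u - g u) x = uext f x - uext g x"
  using uext_fun_add[of f "\<lambda>u. - g u" x] uext_fun_uminus[of g x] by simp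

lemma uext_fun_scale: "uext (\<lambda>u. pm_scale c (f u)) x = pm_scale c (uext f x)"
  by (rule lin_eq[where f="uext (\<lambda>u. pm_scale c (f u))" and g="\<lambda>x. pm_scale c (uext f x)"])
     (simp_all add: addh_uext addh_def pm_scale_add_right uext_add mult.commute)

lemma uext_cong: "(\<And>u. u \<in> ks x \<Longrightarrow> f u = g u) \<Longrightarrow> uext f x = uext g x"
  unfolding uext_def lext_def by simp

lemma uext_basis: "uext (\<lambda>u. sg u 1) x = x"
  by (rule lin_eq[where f="uext (\<lambda>u. sg u 1)" and g="\<lambda>x. x"]) (simp_all add: addh_uext addh_def uext_add)


definition bext :: "('w \<Rightarrow> 'v \<Rightarrow> ('z \<Rightarrow>\<^sub>0 'k::field)) \<Rightarrow> ('w \<Rightarrow>\<^sub>0 'k) \<Rightarrow> ('v \<Rightarrow>\<^sub>0 'k) \<Rightarrow> ('z \<Rightarrow>\<^sub>0 'k)" where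
  "bext h x y = uext (\<lambda>u. uext (h u) y) x"

lemma bext_single[simp]: "bext h (sg u c) (sg v d) = pm_scale (c * d) (h u v)"
  by (simp add: bext_def)
lemma bext_add1: "bext h (x + x') y = bext h x y + bext h x' y"
  by (simp add: bext_def uext_add)
lemma bext_add2: "bext h x (y + y') = bext h x y + bext h x y'"
  by (simp add: bext_def uext_add uext_fun_add)
lemma bext_diff1: "bext h (x - x') y = bext h x y - bext h x' y"
  by (simp add: bext_def uext_diff)
lemma bext_diff2: "bext h x (y - y') = bext h x y - bext h x y'"
  by (simp add: bext_def uext_diff uext_fun_diff)
lemma bext_scale1: "bext h (pm_scale c x) y = pm_scale c (bext h x y)"
  by (simp add: bext_def uext_scale)
lemma bext_scale2: "bext h x (pm_scale c y) = pm_scale c (bext h x y)"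
  by (simp add: bext_def uext_scale uext_fun_scale)
lemma bext_zero1[simp]: "bext h 0 y = 0"
  by (simp add: bext_def)
lemma bext_zero2[simp]: "bext h x 0 = 0"
  by (simp add: bext_def uext_def lext_def)
lemma addh_bext1: "addh (\<lambda>x. bext h x y)"
  by (simp add: addh_def bext_add1)
lemma addh_bext2: "addh (\<lambda>y. bext h x y)"
  by (simp add: addh_def bext_add2)

lemma bilin_eq:
  fixes F G :: "('w \<Rightarrow>\<^sub>0 'k::field) \<Rightarrow> ('v \<Rightarrow>\<^sub>0 'k) \<Rightarrow> 'y::ab_group_add"
  assumes "\<And>y. addh (\<lambda>x. F x y)" "\<And>x. addh (\<lambda>y. F x y)"
    "\<And>y. addh (\<lambda>x. G x y)" "\<And>x. addh (\<lambda>y. G x y)"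
    "\<And>u c v d. F (sg u c) (sg v d) = G (sg u c) (sg v d)"
  shows "F x y = G x y"
proof (rule lin_eq[where f="\<lambda>x. F x y" and g="\<lambda>x. G x y", OF assms(1,3)])
  fix u c show "F (sg u c) y = G (sg u c) y"
    by (rule lin_eq[where f="\<lambda>y. F (sg u c) y" and g="\<lambda>y. G (sg u c) y", OF assms(2,4,5)])
qed

lemma lcons_uext: "lcons a x = uext (\<lambda>w. sg (a # w) 1) x"
  unfolding lcons_def uext_def lext_def by simp
lemma tcons_uext: "tcons a x = uext (\<lambda>w. sg (a, w) 1) x"
  unfolding tcons_def uext_def lext_def by simp
lemma PA_uext: "PA x = uext (\<lambda>u. sg (1, fst u # snd u) 1) x"
  unfolding PA_def uext_def lext_def by simp
lemma tp_mult_bext: "tp_mult x y = bext tp_mult_w x y"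
  unfolding tp_mult_def bext_def uext_def lext_def by (simp add: pm_scale_sum)

lemma lcons_single[simp]: "lcons a (sg w c) = sg (a # w) c"
  by (simp add: lcons_uext)
lemma lcons_add: "lcons a (x + y) = lcons a x + lcons a y"
  by (simp add: lcons_uext uext_add)
lemma lcons_diff: "lcons a (x - y) = lcons a x - lcons a y"
  by (simp add: lcons_uext uext_diff)
lemma lcons_scale: "lcons a (pm_scale c x) = pm_scale c (lcons a x)"
  by (simp add: lcons_uext uext_scale)
lemma lcons_zero[simp]: "lcons a 0 = 0"
  by (simp add: lcons_uext)
lemma addh_lcons: "addh (lcons a)"
  by (simp add: addh_def lcons_add)

lemma tcons_single[simp]: "tcons a (sg w c) = sg (a, w) c"
  by (simp add: tcons_uext)
lemma tcons_add: "tcons a (x + y) = tcons a x + tcons a y"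
  by (simp add: tcons_uext uext_add)
lemma tcons_diff: "tcons a (x - y) = tcons a x - tcons a y"
  by (simp add: tcons_uext uext_diff)
lemma tcons_scale: "tcons a (pm_scale c x) = pm_scale c (tcons a x)"
  by (simp add: tcons_uext uext_scale)
lemma tcons_zero[simp]: "tcons a 0 = 0"
  by (simp add: tcons_uext)
lemma addh_tcons: "addh (tcons a)"
  by (simp add: addh_def tcons_add)

lemma PA_single[simp]: "PA (sg u c) = sg (1, fst u # snd u) c"
  by (simp add: PA_uext)
lemma PA_add: "PA (x + y) = PA x + PA y"
  by (simp add: PA_uext uext_add)
lemma PA_diff: "PA (x - y) = PA x - PA y"
  by (simp add: PA_uext uext_diff)
lemma PA_scale: "PA (pm_scale c x) = pm_scale c (PA x)"
  by (simp add: PA_uext uext_scale)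
lemma addh_PA: "addh PA"
  by (simp add: addh_def PA_add)


subsection \<open>the shuffle\<close>

lemma lsh_Nil2[simp]: "lsh u [] = sg u 1"
  by (cases u) simp_all

lemma lsh_comm: "lsh u v = lsh v u"
proof (induction u v rule: lsh.induct)
  case (3 a U b V)
  then show ?case by (simp add: mult.commute algebra_simps)
qed simp_all

lemma lsh_one: "lsh (1 # u) v = lcons 1 (lsh u v)"
proof (induction v arbitrary: u)
  case (Cons b V)
  then show ?case by (simp add: lcons_add lcons_diff)
qed simp

abbreviation "sh \<equiv> bext lsh"

lemma sh_words[simp]: "sh (sg u 1) (sg v 1) = lsh u v"
  by simp

lemma sh_comm: "sh x y = sh y x"
  by (rule bilin_eq[where F="\<lambda>x y. sh x y" and G="\<lambda>x y. sh y x"])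
     (simp_all add: addh_bext1 addh_bext2 lsh_comm mult.commute)

lemma sh_lcons1: "sh (lcons 1 x) y = lcons 1 (sh x y)"
  by (rule bilin_eq[where F="\<lambda>x y. sh (lcons 1 x) y" and G="\<lambda>x y. lcons 1 (sh x y)"])
     (simp_all add: addh_def bext_add1 bext_add2 lcons_add lsh_one lcons_scale)

lemma sh_lcons1': "sh x (lcons 1 y) = lcons 1 (sh x y)"
  using sh_lcons1[of y x] sh_comm by metis

lemma sh_unit: "sh (sg [] 1) y = y"
  by (rule lin_eq[where f="\<lambda>y. sh (sg [] 1) y" and g="\<lambda>y. y"])
     (simp_all add: addh_def bext_add2)

lemma sh_unit2: "sh y (sg [] 1) = y"
  using sh_unit sh_comm by metis

lemma sh_rec: "sh (lcons a x) (sg (c # W) 1) = lcons a (sh x (sg (c # W) 1))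
   + lcons c (sh (lcons a x) (sg W 1)) - lcons (a * c) (lcons 1 (sh x (sg W 1)))"
  by (rule lin_eq[where f="\<lambda>x. sh (lcons a x) (sg (c # W) 1)" and
        g="\<lambda>x. lcons a (sh x (sg (c # W) 1))
   + lcons c (sh (lcons a x) (sg W 1)) - lcons (a * c) (lcons 1 (sh x (sg W 1)))"])
     (simp_all add: addh_def bext_add1 lcons_add lcons_scale pm_scale_add_right pm_scale_diff_right algebra_simps)

lemma sh_rec2: "sh (sg (a # U) 1) (lcons b y) = lcons a (sh (sg U 1) (lcons b y))
   + lcons b (sh (sg (a # U) 1) y) - lcons (a * b) (lcons 1 (sh (sg U 1) y))"
proof -
  have "sh (sg (a # U) 1) (lcons b y) = sh (lcons b y) (sg (a # U) 1)" by (rule sh_comm)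
  also have "\<dots> = lcons b (sh y (sg (a # U) 1))
   + lcons a (sh (lcons b y) (sg U 1)) - lcons (b * a) (lcons 1 (sh y (sg U 1)))" by (rule sh_rec)
  also have "\<dots> = lcons a (sh (sg U 1) (lcons b y))
   + lcons b (sh (sg (a # U) 1) y) - lcons (a * b) (lcons 1 (sh (sg U 1) y))"
    using sh_comm[of y "sg (a # U) 1"] sh_comm[of "lcons b y" "sg U 1"] sh_comm[of y "sg U 1"]
    by (simp add: mult.commute)
  finally show ?thesis .
qed


lemma lsh_assoc_aux: "length u + length v + length w < n \<Longrightarrow> sh (lsh u v) (sg w (1::'k::field)) = sh (sg u (1::'k)) (lsh v w)"
proof (induction n arbitrary: u v w)
  case 0 then show ?case by simp
next
  case (Suc n)
  note less = Suc(1)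
  show ?case
  proof (cases "u = [] \<or> v = [] \<or> w = []")
    case True
    then show ?thesis by (auto simp: sh_unit sh_unit2)
  next
    case False
    then obtain a U b V c W where u: "u = a # U" and v: "v = b # V" and w: "w = c # W"
      by (meson list.exhaust)
    have ih1: "sh (lsh U (b#V)) (sg (c#W) (1::'k)) = sh (sg U (1::'k)) (lsh (b#V) (c#W))"
      by (rule less) (use Suc(2) in \<open>simp add: u v w\<close>)
    have ih2: "sh (lsh (a#U) V) (sg (c#W) (1::'k)) = sh (sg (a#U) (1::'k)) (lsh V (c#W))"
      by (rule less) (use Suc(2) in \<open>simp add: u v w\<close>)
    have ih3: "sh (lsh U V) (sg (c#W) (1::'k)) = sh (sg U (1::'k)) (lsh V (c#W))"
      by (rule less) (use Suc(2) in \<open>simp add: u v w\<close>)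
    have ih4: "sh (lsh (a#U) (b#V)) (sg W (1::'k)) = sh (sg (a#U) (1::'k)) (lsh (b#V) W)"
      by (rule less) (use Suc(2) in \<open>simp add: u v w\<close>)
    have ih5: "sh (lsh U (b#V)) (sg W (1::'k)) = sh (sg U (1::'k)) (lsh (b#V) W)"
      by (rule less) (use Suc(2) in \<open>simp add: u v w\<close>)
    have ih6: "sh (lsh (a#U) V) (sg W (1::'k)) = sh (sg (a#U) (1::'k)) (lsh V W)"
      by (rule less) (use Suc(2) in \<open>simp add: u v w\<close>)
    have ih7: "sh (lsh U V) (sg W (1::'k)) = sh (sg U (1::'k)) (lsh V W)"
      by (rule less) (use Suc(2) in \<open>simp add: u v w\<close>)
    define P1 where "P1 = (lcons a (sh (sg U (1::'k)) (lsh (b#V) (c#W))) :: _ \<Rightarrow>\<^sub>0 'k)"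
    define P2 where "P2 = (lcons b (sh (sg (a#U) (1::'k)) (lsh V (c#W))) :: _ \<Rightarrow>\<^sub>0 'k)"
    define P3 where "P3 = (lcons (a*b) (lcons 1 (sh (sg U (1::'k)) (lsh V (c#W)))) :: _ \<Rightarrow>\<^sub>0 'k)"
    define P4 where "P4 = (lcons c (sh (sg (a#U) (1::'k)) (lsh (b#V) W)) :: _ \<Rightarrow>\<^sub>0 'k)"
    define P5 where "P5 = (lcons (a*c) (lcons 1 (sh (sg U (1::'k)) (lsh (b#V) W))) :: _ \<Rightarrow>\<^sub>0 'k)"
    define P6 where "P6 = (lcons (b*c) (lcons 1 (sh (sg (a#U) (1::'k)) (lsh V W))) :: _ \<Rightarrow>\<^sub>0 'k)"
    define P7 where "P7 = (lcons (a*b*c) (lcons 1 (lcons 1 (sh (sg U (1::'k)) (lsh V W)))) :: _ \<Rightarrow>\<^sub>0 'k)"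
    define X1 where "X1 = (lsh U (b#V) :: _ \<Rightarrow>\<^sub>0 'k)"
    define X2 where "X2 = (lsh (a#U) V :: _ \<Rightarrow>\<^sub>0 'k)"
    define X3 where "X3 = (lcons 1 (lsh U V) :: _ \<Rightarrow>\<^sub>0 'k)"
    define E where "E = sg (c#W) (1::'k)"
    have L0: "lsh (a#U) (b#V) = lcons a X1 + lcons b X2 - lcons (a*b) X3"
      by (simp add: X1_def X2_def X3_def)
    have La: "sh (lcons a X1) E = P1 + lcons c (sh (lcons a X1) (sg W (1::'k))) - P5"
      unfolding E_def by (subst sh_rec) (simp add: X1_def ih1 ih5 P1_def P5_def)
    have Lb: "sh (lcons b X2) E = P2 + lcons c (sh (lcons b X2) (sg W (1::'k))) - P6"
      unfolding E_def by (subst sh_rec) (simp add: X2_def ih2 ih6 P2_def P6_def)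
    have Lab: "sh (lcons (a*b) X3) E = P3 + lcons c (sh (lcons (a*b) X3) (sg W (1::'k))) - P7"
      unfolding E_def by (subst sh_rec) (simp add: X3_def sh_lcons1 ih3 ih7 P3_def P7_def)
    have Lc: "lcons c (sh (lcons a X1) (sg W (1::'k))) + lcons c (sh (lcons b X2) (sg W (1::'k)))
        - lcons c (sh (lcons (a*b) X3) (sg W (1::'k))) = P4"
      unfolding P4_def ih4[symmetric] L0 by (simp add: bext_add1 bext_diff1 lcons_add lcons_diff)
    have LHS: "sh (lsh u v) (sg w (1::'k)) = P1 + P2 - P3 + P4 - P5 - P6 + P7"
    proof -
      have "sh (lsh u v) (sg w (1::'k)) = sh (lcons a X1) E + sh (lcons b X2) E - sh (lcons (a*b) X3) E"
        unfolding u v w E_def L0 by (simp add: bext_add1 bext_diff1)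
      also have "\<dots> = P1 + P2 - P3 + P4 - P5 - P6 + P7"
        unfolding La Lb Lab Lc[symmetric] by (simp add: algebra_simps)
      finally show ?thesis .
    qed
    define Y1 where "Y1 = (lsh V (c#W) :: _ \<Rightarrow>\<^sub>0 'k)"
    define Y2 where "Y2 = (lsh (b#V) W :: _ \<Rightarrow>\<^sub>0 'k)"
    define Y3 where "Y3 = (lcons 1 (lsh V W) :: _ \<Rightarrow>\<^sub>0 'k)"
    define F where "F = sg (a#U) (1::'k)"
    have R0: "lsh (b#V) (c#W) = lcons b Y1 + lcons c Y2 - lcons (b*c) Y3"
      by (simp add: Y1_def Y2_def Y3_def)
    have Ra: "sh F (lcons b Y1) = lcons a (sh (sg U (1::'k)) (lcons b Y1)) + P2 - P3"
      unfolding F_def by (subst sh_rec2) (simp add: Y1_def P2_def P3_def)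
    have Rb: "sh F (lcons c Y2) = lcons a (sh (sg U (1::'k)) (lcons c Y2)) + P4 - P5"
      unfolding F_def by (subst sh_rec2) (simp add: Y2_def P4_def P5_def)
    have Rbc: "sh F (lcons (b*c) Y3) = lcons a (sh (sg U (1::'k)) (lcons (b*c) Y3)) + P6 - P7"
      unfolding F_def by (subst sh_rec2) (simp add: Y3_def P6_def P7_def sh_lcons1' mult.assoc)
    have Rc: "lcons a (sh (sg U (1::'k)) (lcons b Y1)) + lcons a (sh (sg U (1::'k)) (lcons c Y2))
        - lcons a (sh (sg U (1::'k)) (lcons (b*c) Y3)) = P1"
      unfolding P1_def R0 by (simp add: bext_add2 bext_diff2 lcons_add lcons_diff)
    have RHS: "sh (sg u (1::'k)) (lsh v w) = P1 + P2 - P3 + P4 - P5 - P6 + P7"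
    proof -
      have "sh (sg u (1::'k)) (lsh v w) = sh F (lcons b Y1) + sh F (lcons c Y2) - sh F (lcons (b*c) Y3)"
        unfolding u v w F_def R0 by (simp add: bext_add2 bext_diff2)
      also have "\<dots> = P1 + P2 - P3 + P4 - P5 - P6 + P7"
        unfolding Ra Rb Rbc Rc[symmetric] by (simp add: algebra_simps)
      finally show ?thesis .
    qed
    show ?thesis using LHS RHS by simp
  qed
qed

lemma lsh_assoc: "sh (lsh u v) (sg w 1) = sh (sg u 1) (lsh v w)"
  by (rule lsh_assoc_aux[of _ _ _ "Suc (length u + length v + length w)"]) simp


subsection \<open>the product on T^+\<close>

lemma sg_scale1: "sg u c = pm_scale c (sg u 1)"
  by simp

lemma tp_mult_single: "tp_mult (sg (a, U) c) (sg (b, V) d) = pm_scale (c * d) (tcons (a * b) (lsh U V))"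
  by (simp add: tp_mult_bext tp_mult_w_def)

lemma addh_tp1: "addh (\<lambda>x. tp_mult x y)"
  by (simp add: tp_mult_bext addh_bext1)
lemma addh_tp2: "addh (\<lambda>y. tp_mult x y)"
  by (simp add: tp_mult_bext addh_bext2)
lemma tp_add1: "tp_mult (x + x') y = tp_mult x y + tp_mult x' y"
  by (simp add: tp_mult_bext bext_add1)
lemma tp_add2: "tp_mult x (y + y') = tp_mult x y + tp_mult x y'"
  by (simp add: tp_mult_bext bext_add2)
lemma tp_diff1: "tp_mult (x - x') y = tp_mult x y - tp_mult x' y"
  by (simp add: tp_mult_bext bext_diff1)
lemma tp_scale1: "tp_mult (pm_scale c x) y = pm_scale c (tp_mult x y)"
  by (simp add: tp_mult_bext bext_scale1)
lemma tp_scale2: "tp_mult x (pm_scale c y) = pm_scale c (tp_mult x y)"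
  by (simp add: tp_mult_bext bext_scale2)

lemma tp_comm: "tp_mult x y = tp_mult y x"
  unfolding tp_mult_bext
  by (rule bilin_eq[where F="\<lambda>x y. bext tp_mult_w x y" and G="\<lambda>x y. bext tp_mult_w y x"])
     (auto simp add: addh_bext1 addh_bext2 tp_mult_w_def lsh_comm mult.commute)

lemma tp_unit: "tp_mult tp_one x = x"
  by (rule lin_eq[where f="\<lambda>x. tp_mult tp_one x" and g="\<lambda>x. x"])
     (auto simp add: addh_def tp_one_def tp_mult_bext tp_mult_w_def bext_add2)

lemma tp_mult_tcons: "tp_mult (tcons a x) (sg (b, W) 1) = tcons (a * b) (sh x (sg W 1))"
  by (rule lin_eq[where f="\<lambda>x. tp_mult (tcons a x) (sg (b, W) 1)" and g="\<lambda>x. tcons (a * b) (sh x (sg W 1))"])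
     (simp_all add: addh_def tp_add1 tcons_add bext_add1 tcons_scale tp_mult_single)

lemma tp_mult_tcons2: "tp_mult (sg (a, U) 1) (tcons b y) = tcons (a * b) (sh (sg U 1) y)"
  by (rule lin_eq[where f="\<lambda>y. tp_mult (sg (a, U) 1) (tcons b y)" and g="\<lambda>y. tcons (a * b) (sh (sg U 1) y)"])
     (simp_all add: addh_def tp_add2 tcons_add bext_add2 tcons_scale tp_mult_single)

lemma tp_assoc_single: "tp_mult (tp_mult (sg (a, U) c) (sg (b, V) d)) z = tp_mult (sg (a, U) c) (tp_mult (sg (b, V) d) z)"
proof (rule lin_eq[where f="\<lambda>z. tp_mult (tp_mult (sg (a, U) c) (sg (b, V) d)) z" and g="\<lambda>z. tp_mult (sg (a, U) c) (tp_mult (sg (b, V) d) z)"])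
  show "addh (\<lambda>z. tp_mult (tp_mult (sg (a, U) c) (sg (b, V) d)) z)" by (simp add: addh_def tp_add2)
  show "addh (\<lambda>z. tp_mult (sg (a, U) c) (tp_mult (sg (b, V) d) z))" by (simp add: addh_def tp_add2)
  fix w f
  show "tp_mult (tp_mult (sg (a, U) c) (sg (b, V) d)) (sg w f) = tp_mult (sg (a, U) c) (tp_mult (sg (b, V) d) (sg w f))"
  proof (cases w)
    case (Pair e W)
    have "tp_mult (tp_mult (sg (a, U) c) (sg (b, V) d)) (sg w f) = pm_scale (c * d * f) (tcons (a * b * e) (sh (lsh U V) (sg W 1)))"
      unfolding Pair tp_mult_single sg_scale1[of _ f] tp_scale1 tp_scale2 tp_mult_tcons by (simp add: mult.commute)
    also have "\<dots> = pm_scale (c * d * f) (tcons (a * b * e) (sh (sg U 1) (lsh V W)))"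
      by (simp add: lsh_assoc)
    also have "\<dots> = tp_mult (sg (a, U) c) (tp_mult (sg (b, V) d) (sg w f))"
      unfolding Pair tp_mult_single sg_scale1[of _ c] tp_scale1 tp_scale2 tp_mult_tcons2
      by (simp add: mult.commute mult.left_commute)
    finally show ?thesis .
  qed
qed

lemma tp_assoc: "tp_mult (tp_mult x y) z = tp_mult x (tp_mult y z)"
proof (rule bilin_eq[where F="\<lambda>x y. tp_mult (tp_mult x y) z" and G="\<lambda>x y. tp_mult x (tp_mult y z)"])
  show "addh (\<lambda>x. tp_mult (tp_mult x y) z)" for y by (simp add: addh_def tp_add1)
  show "addh (\<lambda>y. tp_mult (tp_mult x y) z)" for x by (simp add: addh_def tp_add1 tp_add2)
  show "addh (\<lambda>x. tp_mult x (tp_mult y z))" for y by (simp add: addh_def tp_add1)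
  show "addh (\<lambda>y. tp_mult x (tp_mult y z))" for x by (simp add: addh_def tp_add1 tp_add2)
qed (metis tp_assoc_single prod.collapse)

lemma PA_tcons: "PA (tcons b x) = tcons 1 (lcons b x)"
  by (rule lin_eq[where f="\<lambda>x. PA (tcons b x)" and g="\<lambda>x. tcons 1 (lcons b x)"])
     (simp_all add: addh_def PA_add tcons_add lcons_add)

lemma PA_one: "PA tp_one = sg (1, [1]) 1"
  by (simp add: tp_one_def)

lemma lsh_U_one: "lsh U [1] = sg (1 # U) 1"
  using lsh_one[of "[]" U] by (simp add: lsh_comm)

lemma tp_TD_single: "tp_mult (PA (sg (a, U) c)) (PA (sg (b, V) d)) =
    PA (tp_mult (PA (sg (a, U) c)) (sg (b, V) d) + tp_mult (sg (a, U) c) (PA (sg (b, V) d))) - PA (tp_mult (tp_mult (sg (a, U) c) (PA tp_one)) (sg (b, V) d))"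
proof -
  have 1: "tp_mult (sg (a, U) c) (PA tp_one) = sg (a, 1 # U) c"
    unfolding PA_one tp_mult_single by (simp add: lsh_U_one)
  show ?thesis
    unfolding 1 unfolding PA_single fst_conv snd_conv tp_mult_single
    by (simp add: PA_scale PA_add PA_tcons lsh_one pm_scale_add_right pm_scale_diff_right
         tcons_add tcons_diff lcons_add lcons_diff algebra_simps)
qed

lemma tp_TD: "tp_mult (PA x) (PA y) =
  PA (tp_mult (PA x) y + tp_mult x (PA y)) - PA (tp_mult (tp_mult x (PA tp_one)) y)"
proof (rule bilin_eq[where F="\<lambda>x y. tp_mult (PA x) (PA y)" and
    G="\<lambda>x y. PA (tp_mult (PA x) y + tp_mult x (PA y)) - PA (tp_mult (tp_mult x (PA tp_one)) y)"])
  show "addh (\<lambda>x. tp_mult (PA x) (PA y))" for y by (simp add: addh_def tp_add1 PA_add)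
  show "addh (\<lambda>y. tp_mult (PA x) (PA y))" for x by (simp add: addh_def tp_add2 PA_add)
  show "addh (\<lambda>x. PA (tp_mult (PA x) y + tp_mult x (PA y)) - PA (tp_mult (tp_mult x (PA tp_one)) y))" for y
    by (simp add: addh_def tp_add1 PA_add PA_diff algebra_simps)
  show "addh (\<lambda>y. PA (tp_mult (PA x) y + tp_mult x (PA y)) - PA (tp_mult (tp_mult x (PA tp_one)) y))" for x
    by (simp add: addh_def tp_add2 PA_add PA_diff algebra_simps)
qed (metis tp_TD_single prod.collapse)


subsection \<open>relations\<close>

inductive_set Rl :: "('k::field \<Rightarrow> 'a \<Rightarrow> 'a::ab_group_add) \<Rightarrow> ('a list \<Rightarrow>\<^sub>0 'k) set"
  for s where
  zero: "0 \<in> Rl s"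
| add: "x \<in> Rl s \<Longrightarrow> y \<in> Rl s \<Longrightarrow> x + y \<in> Rl s"
| scale: "x \<in> Rl s \<Longrightarrow> pm_scale c x \<in> Rl s"
| gen_add: "sg (xs @ (a + b) # ys) 1 - sg (xs @ a # ys) 1 - sg (xs @ b # ys) 1 \<in> Rl s"
| gen_scale: "sg (xs @ s c a # ys) 1 - pm_scale c (sg (xs @ a # ys) 1) \<in> Rl s"

lemma pm_scale_m1: "pm_scale (-1) x = - x"
  by (rule poly_mapping_eqI) simp

lemma Rl_uminus: "x \<in> Rl s \<Longrightarrow> - x \<in> Rl s"
  using Rl.scale[of x s "-1"] by (simp add: pm_scale_m1)
lemma Rl_diff: "x \<in> Rl s \<Longrightarrow> y \<in> Rl s \<Longrightarrow> x - y \<in> Rl s"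
  by (simp only: diff_conv_add_uminus Rl.add Rl_uminus)

lemma tp_rel_uminus: "x \<in> tp_rel s \<Longrightarrow> - x \<in> tp_rel s"
  using tp_rel.scale[of x s "-1"] by (simp add: pm_scale_m1)
lemma tp_rel_diff: "x \<in> tp_rel s \<Longrightarrow> y \<in> tp_rel s \<Longrightarrow> x - y \<in> tp_rel s"
  by (simp only: diff_conv_add_uminus tp_rel.add tp_rel_uminus)

lemma lcons_Rl: "x \<in> Rl s \<Longrightarrow> lcons e x \<in> Rl s"
proof (induction rule: Rl.induct)
  case (add x y) then show ?case by (simp add: lcons_add Rl.add)
next
  case (scale x c) then show ?case by (simp add: lcons_scale Rl.scale)
next
  case (gen_add xs a b ys) then show ?case
    using Rl.gen_add[where xs="e # xs" and a=a and b=b and ys=ys and s=s] by (simp add: lcons_diff)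
next
  case (gen_scale xs c a ys) then show ?case
    using Rl.gen_scale[where xs="e # xs" and a=a and c=c and ys=ys and s=s] by (simp add: lcons_diff lcons_scale)
qed (simp add: Rl.zero)

lemma tword_cons: "tword (e # w) = sg (e, w) 1"
  by (simp add: tword_def)

lemma tcons_Rl: "x \<in> Rl s \<Longrightarrow> tcons e x \<in> tp_rel s"
proof (induction rule: Rl.induct)
  case (add x y) then show ?case by (simp add: tcons_add tp_rel.add)
next
  case (scale x c) then show ?case by (simp add: tcons_scale tp_rel.scale)
next
  case (gen_add xs a b ys) then show ?case
    using tp_rel.gen_add[of "e # xs" a b ys s] by (simp add: tcons_diff tword_cons)
next
  case (gen_scale xs c a ys) then show ?case
    using tp_rel.gen_scale[of "e # xs" s c a ys] by (simp add: tcons_diff tcons_scale tword_cons)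
qed (simp add: tp_rel.zero)


lemma abel3b: "((p1::'g::ab_group_add) + q1) - (p2 + q2) - (p3 + q3) = (p1 - p2 - p3) + (q1 - q2 - q3)"
  by (simp add: algebra_simps)
lemma abel2b: "((p1::'g::ab_group_add) + q1) - (p2 + q2) = (p1 - p2) + (q1 - q2)"
  by (simp add: algebra_simps)

lemma lcons_gen_add: "lcons (a + b) x - lcons a x - lcons b x \<in> Rl s"
proof (induction x rule: pm_induct)
  case zero then show ?case by (simp add: Rl.zero)
next
  case (add u c x)
  have "lcons (a + b) (sg u c + x) - lcons a (sg u c + x) - lcons b (sg u c + x) =
    pm_scale c (sg ([] @ (a + b) # u) 1 - sg ([] @ a # u) 1 - sg ([] @ b # u) 1) + (lcons (a + b) x - lcons a x - lcons b x)"
    unfolding lcons_add abel3b by (simp add: pm_scale_diff_right)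
  note eq = this
  show ?case unfolding eq by (rule Rl.add[OF Rl.scale[OF Rl.gen_add] add])
qed

lemma lcons_gen_scale: "lcons (s k a) x - pm_scale k (lcons a x) \<in> Rl s"
proof (induction x rule: pm_induct)
  case zero then show ?case by (simp add: Rl.zero)
next
  case (add u c x)
  have "lcons (s k a) (sg u c + x) - pm_scale k (lcons a (sg u c + x)) =
    pm_scale c (sg ([] @ s k a # u) 1 - pm_scale k (sg ([] @ a # u) 1)) + (lcons (s k a) x - pm_scale k (lcons a x))"
    unfolding lcons_add pm_scale_add_right abel2b by (simp add: pm_scale_diff_right mult.commute)
  note eq = this
  show ?case unfolding eq by (rule Rl.add[OF Rl.scale[OF Rl.gen_scale] add])
qed

lemma tcons_gen_add: "tcons (a + b) x - tcons a x - tcons b x \<in> tp_rel s"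
proof (induction x rule: pm_induct)
  case zero then show ?case by (simp add: tp_rel.zero)
next
  case (add u c x)
  have "tcons (a + b) (sg u c + x) - tcons a (sg u c + x) - tcons b (sg u c + x) =
    pm_scale c (tword ([] @ (a + b) # u) - tword ([] @ a # u) - tword ([] @ b # u)) + (tcons (a + b) x - tcons a x - tcons b x)"
    unfolding tcons_add abel3b by (simp add: pm_scale_diff_right tword_cons)
  note eq = this
  show ?case unfolding eq by (rule tp_rel.add[OF tp_rel.scale[OF tp_rel.gen_add] add])
qed

lemma tcons_gen_scale: "tcons (s k a) x - pm_scale k (tcons a x) \<in> tp_rel s"
proof (induction x rule: pm_induct)
  case zero then show ?case by (simp add: tp_rel.zero)
next
  case (add u c x)
  have "tcons (s k a) (sg u c + x) - pm_scale k (tcons a (sg u c + x)) =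
    pm_scale c (tword ([] @ s k a # u) - pm_scale k (tword ([] @ a # u))) + (tcons (s k a) x - pm_scale k (tcons a x))"
    by (simp add: tcons_add pm_scale_diff_right pm_scale_add_right algebra_simps tword_cons)
  note eq = this
  show ?case unfolding eq by (rule tp_rel.add[OF tp_rel.scale[OF tp_rel.gen_scale] add])
qed

lemma abel3: "((a1::'g::ab_group_add) + b1 - c1) - (a2 + b2 - c2) - (a3 + b3 - c3) = (a1 - a2 - a3) + (b1 - b2 - b3) - (c1 - c2 - c3)"
  by (simp add: algebra_simps)


lemma lsh_Rl_add: "lsh (xs @ (a + b) # ys) W - lsh (xs @ a # ys) W - lsh (xs @ b # ys) W \<in> Rl s"
proof (induction W arbitrary: xs)
  case Nil
  then show ?case using Rl.gen_add by simp
next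
  case (Cons c W)
  note outer = Cons.IH
  show ?case
  proof (induction xs)
    case Nil
    have e: "lsh ([] @ (a + b) # ys) (c # W) - lsh ([] @ a # ys) (c # W) - lsh ([] @ b # ys) (c # W) =
      (lcons (a + b) (lsh ys (c # W)) - lcons a (lsh ys (c # W)) - lcons b (lsh ys (c # W)))
      + lcons c (lsh ([] @ (a + b) # ys) W - lsh ([] @ a # ys) W - lsh ([] @ b # ys) W)
      - (lcons (a * c + b * c) (lcons 1 (lsh ys W)) - lcons (a * c) (lcons 1 (lsh ys W)) - lcons (b * c) (lcons 1 (lsh ys W)))"
      by (simp only: append.simps lsh.simps abel3 lcons_diff distrib_right)
    have m1: "lcons (a + b) (lsh ys (c # W)) - lcons a (lsh ys (c # W)) - lcons b (lsh ys (c # W)) \<in> Rl s"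
      by (rule lcons_gen_add)
    have m2: "lcons c (lsh ([] @ (a + b) # ys) W - lsh ([] @ a # ys) W - lsh ([] @ b # ys) W) \<in> Rl s"
      by (rule lcons_Rl) (rule outer)
    have m3: "lcons (a * c + b * c) (lcons 1 (lsh ys W)) - lcons (a * c) (lcons 1 (lsh ys W)) - lcons (b * c) (lcons 1 (lsh ys W)) \<in> Rl s"
      by (rule lcons_gen_add)
    show ?case unfolding e using m1 m2 m3 by (simp only: Rl.add Rl_diff)
  next
    case (Cons x xs)
    have e: "lsh ((x # xs) @ (a + b) # ys) (c # W) - lsh ((x # xs) @ a # ys) (c # W) - lsh ((x # xs) @ b # ys) (c # W) =
      lcons x (lsh (xs @ (a + b) # ys) (c # W) - lsh (xs @ a # ys) (c # W) - lsh (xs @ b # ys) (c # W))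
      + lcons c (lsh ((x # xs) @ (a + b) # ys) W - lsh ((x # xs) @ a # ys) W - lsh ((x # xs) @ b # ys) W)
      - lcons (x * c) (lcons 1 (lsh (xs @ (a + b) # ys) W - lsh (xs @ a # ys) W - lsh (xs @ b # ys) W))"
      by (simp only: append.simps lsh.simps abel3 lcons_diff)
    have m1: "lcons x (lsh (xs @ (a + b) # ys) (c # W) - lsh (xs @ a # ys) (c # W) - lsh (xs @ b # ys) (c # W)) \<in> Rl s"
      by (rule lcons_Rl) (rule Cons.IH)
    have m2: "lcons c (lsh ((x # xs) @ (a + b) # ys) W - lsh ((x # xs) @ a # ys) W - lsh ((x # xs) @ b # ys) W) \<in> Rl s"
      by (rule lcons_Rl) (rule outer)
    have m3: "lcons (x * c) (lcons 1 (lsh (xs @ (a + b) # ys) W - lsh (xs @ a # ys) W - lsh (xs @ b # ys) W)) \<in> Rl s"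
      by (intro lcons_Rl) (rule outer)
    show ?case unfolding e using m1 m2 m3 by (simp only: Rl.add Rl_diff)
  qed
qed



lemma abel3s: "(A1 + B1 - C1) - pm_scale k (A2 + B2 - C2) = (A1 - pm_scale k A2) + (B1 - pm_scale k B2) - (C1 - pm_scale k C2)"
  by (simp add: pm_scale_add_right pm_scale_diff_right algebra_simps)

lemma lsh_Rl_scale:
  assumes ks: "\<And>k a c. s k a * c = s k (a * c)"
  shows "lsh (xs @ s k a # ys) W - pm_scale k (lsh (xs @ a # ys) W) \<in> Rl s"
proof (induction W arbitrary: xs)
  case Nil
  then show ?case using Rl.gen_scale by simp
next
  case (Cons c W)
  note outer = Cons.IH
  show ?case
  proof (induction xs)
    case Nil
    have e: "lsh ([] @ s k a # ys) (c # W) - pm_scale k (lsh ([] @ a # ys) (c # W)) =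
      (lcons (s k a) (lsh ys (c # W)) - pm_scale k (lcons a (lsh ys (c # W))))
      + lcons c (lsh ([] @ s k a # ys) W - pm_scale k (lsh ([] @ a # ys) W))
      - (lcons (s k (a * c)) (lcons 1 (lsh ys W)) - pm_scale k (lcons (a * c) (lcons 1 (lsh ys W))))"
      by (simp only: append.simps lsh.simps abel3s lcons_diff lcons_scale ks)
    have m1: "lcons (s k a) (lsh ys (c # W)) - pm_scale k (lcons a (lsh ys (c # W))) \<in> Rl s"
      by (rule lcons_gen_scale)
    have m2: "lcons c (lsh ([] @ s k a # ys) W - pm_scale k (lsh ([] @ a # ys) W)) \<in> Rl s"
      by (rule lcons_Rl) (rule outer)
    have m3: "lcons (s k (a * c)) (lcons 1 (lsh ys W)) - pm_scale k (lcons (a * c) (lcons 1 (lsh ys W))) \<in> Rl s"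
      by (rule lcons_gen_scale)
    show ?case unfolding e using m1 m2 m3 by (simp only: Rl.add Rl_diff)
  next
    case (Cons x xs)
    have e: "lsh ((x # xs) @ s k a # ys) (c # W) - pm_scale k (lsh ((x # xs) @ a # ys) (c # W)) =
      lcons x (lsh (xs @ s k a # ys) (c # W) - pm_scale k (lsh (xs @ a # ys) (c # W)))
      + lcons c (lsh ((x # xs) @ s k a # ys) W - pm_scale k (lsh ((x # xs) @ a # ys) W))
      - lcons (x * c) (lcons 1 (lsh (xs @ s k a # ys) W - pm_scale k (lsh (xs @ a # ys) W)))"
      by (simp only: append.simps lsh.simps abel3s lcons_diff lcons_scale)
    have m1: "lcons x (lsh (xs @ s k a # ys) (c # W) - pm_scale k (lsh (xs @ a # ys) (c # W))) \<in> Rl s"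
      by (rule lcons_Rl) (rule Cons.IH)
    have m2: "lcons c (lsh ((x # xs) @ s k a # ys) W - pm_scale k (lsh ((x # xs) @ a # ys) W)) \<in> Rl s"
      by (rule lcons_Rl) (rule outer)
    have m3: "lcons (x * c) (lcons 1 (lsh (xs @ s k a # ys) W - pm_scale k (lsh (xs @ a # ys) W))) \<in> Rl s"
      by (intro lcons_Rl) (rule outer)
    show ?case unfolding e using m1 m2 m3 by (simp only: Rl.add Rl_diff)
  qed
qed

lemma right_lin_rel:
  assumes "\<And>e W. tp_mult g (sg (e, W) 1) \<in> tp_rel s"
  shows "tp_mult g y \<in> tp_rel s"
proof (induction y rule: pm_induct)
  case zero
  then show ?case by (simp add: tp_mult_bext tp_rel.zero)
next
  case (add v d y)
  obtain e W where v: "v = (e, W)" by fastforce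
  have "tp_mult g (sg v d) = pm_scale d (tp_mult g (sg (e, W) 1))"
    unfolding v by (subst sg_scale1) (rule tp_scale2)
  then show ?case using add assms by (simp add: tp_add2 tp_rel.add tp_rel.scale)
qed

lemma tp_mult_tword: "tp_mult (tword (h # t)) (sg (e, W) 1) = tcons (h * e) (lsh t W)"
  by (simp add: tword_cons tp_mult_single)

lemma tp_rel_ideal:
  assumes ks: "\<And>k a c. s k a * c = s k (a * c)"
  assumes "x \<in> tp_rel s"
  shows "tp_mult x y \<in> tp_rel s"
  using assms(2)
proof (induction rule: tp_rel.induct)
  case zero then show ?case by (simp add: tp_mult_bext tp_rel.zero)
next
  case (add x z) then show ?case by (simp add: tp_add1 tp_rel.add)
next
  case (scale x c) then show ?case by (simp add: tp_scale1 tp_rel.scale)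
next
  case (gen_add xs a b ys)
  show ?case
  proof (rule right_lin_rel)
    fix e W
    show "tp_mult (tword (xs @ (a + b) # ys) - tword (xs @ a # ys) - tword (xs @ b # ys)) (sg (e, W) 1) \<in> tp_rel s"
    proof (cases xs)
      case Nil
      have "tcons (a * e + b * e) (lsh ys W) - tcons (a * e) (lsh ys W) - tcons (b * e) (lsh ys W) \<in> tp_rel s"
        by (rule tcons_gen_add)
      then show ?thesis unfolding Nil tp_diff1 by (simp only: append.simps tp_mult_tword distrib_right)
    next
      case (Cons x xs')
      have "tcons (x * e) (lsh (xs' @ (a + b) # ys) W - lsh (xs' @ a # ys) W - lsh (xs' @ b # ys) W) \<in> tp_rel s"
        by (rule tcons_Rl) (rule lsh_Rl_add)
      then show ?thesis unfolding Cons tp_diff1 by (simp only: append.simps tp_mult_tword tcons_diff)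
    qed
  qed
next
  case (gen_scale xs c a ys)
  show ?case
  proof (rule right_lin_rel)
    fix e W
    show "tp_mult (tword (xs @ s c a # ys) - pm_scale c (tword (xs @ a # ys))) (sg (e, W) 1) \<in> tp_rel s"
    proof (cases xs)
      case Nil
      have "tcons (s c (a * e)) (lsh ys W) - pm_scale c (tcons (a * e) (lsh ys W)) \<in> tp_rel s"
        by (rule tcons_gen_scale)
      then show ?thesis unfolding Nil tp_diff1 tp_scale1 by (simp only: append.simps tp_mult_tword ks)
    next
      case (Cons x xs')
      have "tcons (x * e) (lsh (xs' @ s c a # ys) W - pm_scale c (lsh (xs' @ a # ys) W)) \<in> tp_rel s"
        by (rule tcons_Rl) (rule lsh_Rl_scale[OF ks])
      then show ?thesis unfolding Cons tp_diff1 tp_scale1 by (simp only: append.simps tp_mult_tword tcons_diff tcons_scale)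
    qed
  qed
qed

lemma PA_tword: "PA (tword (h # t)) = tword (1 # h # t)"
  by (simp add: tword_cons)

lemma PA_rel: "x \<in> tp_rel s \<Longrightarrow> PA x \<in> tp_rel s"
proof (induction rule: tp_rel.induct)
  case zero then show ?case by (simp add: PA_uext tp_rel.zero)
next
  case (add x z) then show ?case by (simp add: PA_add tp_rel.add)
next
  case (scale x c) then show ?case by (simp add: PA_scale tp_rel.scale)
next
  case (gen_add xs a b ys)
  have "tword ((1 # xs) @ (a + b) # ys) - tword ((1 # xs) @ a # ys) - tword ((1 # xs) @ b # ys) \<in> tp_rel s"
    by (rule tp_rel.gen_add)
  then show ?case by (cases xs) (simp_all only: PA_diff PA_tword append.simps)
next
  case (gen_scale xs c a ys)
  have "tword ((1 # xs) @ s c a # ys) - pm_scale c (tword ((1 # xs) @ a # ys)) \<in> tp_rel s"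
    by (rule tp_rel.gen_scale)
  then show ?case by (cases xs) (simp_all only: PA_diff PA_scale PA_tword append.simps)
qed



locale psi_setup =
  fixes sa :: "'k::field \<Rightarrow> 'a::comm_ring_1 \<Rightarrow> 'a"
    and sb :: "'k \<Rightarrow> 'b::comm_ring_1 \<Rightarrow> 'b"
    and P :: "'b \<Rightarrow> 'b"
    and \<phi> :: "'a \<Rightarrow> 'b"
  assumes ka: "kalg sa" and kb: "kalg sb" and td: "td_alg sb P" and hom: "ualg_hom sa sb \<phi>"
begin

lemma vsb: "vector_space sb" using kb by (simp add: kalg_def)
lemma msb: "module sb" using vsb by (simp add: module_iff_vector_space)

lemma sb_add: "sb c (x + y) = sb c x + sb c y"
  using vsb by (simp add: vector_space_def)
lemma sb_ladd: "sb (c + d) x = sb c x + sb d x"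
  using vsb by (simp add: vector_space_def)
lemma sb_scale: "sb c (sb d x) = sb (c * d) x"
  using vsb by (simp add: vector_space_def)
lemma sb_one: "sb 1 x = x"
  using vsb by (simp add: vector_space_def)
lemma sb_zero_left: "sb 0 x = 0"
  using module.scale_zero_left[OF msb] .
lemma sb_zero_right: "sb c 0 = 0"
  using module.scale_zero_right[OF msb] .
lemma sb_mult: "sb c (x * y) = sb c x * y"
  using kb by (simp add: kalg_def)
lemma sb_mult2: "x * sb c y = sb c (x * y)"
  using sb_mult[of c y x] by (simp add: mult.commute)

lemma P_add: "P (x + y) = P x + P y"
  using td by (simp add: td_alg_def Vector_Spaces.linear_iff)
lemma P_scale: "P (sb c x) = sb c (P x)"
  using td by (simp add: td_alg_def Vector_Spaces.linear_iff)
lemma P_TD: "P x * P y = P (P x * y + x * P y) - P (x * P 1 * y)"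
  using td by (simp add: td_alg_def)
lemma addh_P: "addh P" by (simp add: addh_def P_add)
lemma P_diff: "P (x - y) = P x - P y" by (rule addh_diff[OF addh_P])

lemma phi_add: "\<phi> (x + y) = \<phi> x + \<phi> y"
  using hom by (simp add: ualg_hom_def Vector_Spaces.linear_iff)
lemma phi_scale: "\<phi> (sa c x) = sb c (\<phi> x)"
  using hom by (simp add: ualg_hom_def Vector_Spaces.linear_iff)
lemma phi_one: "\<phi> 1 = 1"
  using hom by (simp add: ualg_hom_def)
lemma phi_mult: "\<phi> (x * y) = \<phi> x * \<phi> y"
  using hom by (simp add: ualg_hom_def)

lemma PP: "P (P z) = P z * P 1"
  using P_TD[of z 1] by (simp add: P_add)

primrec Q :: "'a list \<Rightarrow> 'b" where
  "Q [] = 1"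
| "Q (c # w) = P (\<phi> c * Q w)"

definition psi :: "('a \<times> 'a list \<Rightarrow>\<^sub>0 'k) \<Rightarrow> 'b" where
  "psi x = lext (\<lambda>u k. sb k (\<phi> (fst u) * Q (snd u))) x"

definition Qx :: "('a list \<Rightarrow>\<^sub>0 'k) \<Rightarrow> 'b" where
  "Qx x = lext (\<lambda>w k. sb k (Q w)) x"

lemma add2_psi: "additive2 (\<lambda>u k. sb k (\<phi> (fst u) * Q (snd u)))"
  by (simp add: additive2_def sb_ladd)
lemma add2_Qx: "additive2 (\<lambda>w k. sb k (Q w))"
  by (simp add: additive2_def sb_ladd)

lemma psi_add: "psi (x + y) = psi x + psi y"
  unfolding psi_def by (rule lext_add[OF add2_psi])
lemma addh_psi: "addh psi" by (simp add: addh_def psi_add)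
lemma psi_diff: "psi (x - y) = psi x - psi y" by (rule addh_diff[OF addh_psi])
lemma psi_single: "psi (sg u k) = sb k (\<phi> (fst u) * Q (snd u))"
  unfolding psi_def by (rule lext_single[OF add2_psi])

lemma Qx_add: "Qx (x + y) = Qx x + Qx y"
  unfolding Qx_def by (rule lext_add[OF add2_Qx])
lemma addh_Qx: "addh Qx" by (simp add: addh_def Qx_add)
lemma Qx_diff: "Qx (x - y) = Qx x - Qx y" by (rule addh_diff[OF addh_Qx])
lemma Qx_single: "Qx (sg w k) = sb k (Q w)"
  unfolding Qx_def by (rule lext_single[OF add2_Qx])

lemma psi_scale: "psi (pm_scale c x) = sb c (psi x)"
  by (rule lin_eq[where f="\<lambda>x. psi (pm_scale c x)" and g="\<lambda>x. sb c (psi x)"])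
     (simp_all add: addh_def psi_add pm_scale_add_right sb_add psi_single sb_scale)

lemma Qx_lcons: "Qx (lcons a x) = P (\<phi> a * Qx x)"
  by (rule lin_eq[where f="\<lambda>x. Qx (lcons a x)" and g="\<lambda>x. P (\<phi> a * Qx x)"])
     (simp_all add: addh_def Qx_add lcons_add distrib_left P_add Qx_single sb_mult2 P_scale)

lemma psi_tcons: "psi (tcons e x) = \<phi> e * Qx x"
  by (rule lin_eq[where f="\<lambda>x. psi (tcons e x)" and g="\<lambda>x. \<phi> e * Qx x"])
     (simp_all add: addh_def psi_add tcons_add distrib_left Qx_single psi_single sb_mult2 Qx_add)

lemma Q_prod_P: "U \<noteq> [] \<or> V \<noteq> [] \<Longrightarrow> \<exists>m. Q U * Q V = P m"
proof (cases U)
  case Nil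
  assume "U \<noteq> [] \<or> V \<noteq> []"
  with Nil obtain d V' where "V = d # V'" by (cases V) auto
  then show ?thesis using Nil by auto
next
  case (Cons c U')
  show ?thesis
  proof (cases V)
    case Nil then show ?thesis using Cons by auto
  next
    case (Cons d V')
    show ?thesis unfolding Cons \<open>U = c # U'\<close> Q.simps P_TD P_diff[symmetric] by blast
  qed
qed

lemma PQ: "P (Q U * Q V) = P 1 * Q U * Q V"
proof (cases "U = [] \<and> V = []")
  case True then show ?thesis by simp
next
  case False
  then obtain m where m: "Q U * Q V = P m" using Q_prod_P by blast
  show ?thesis unfolding mult.assoc m PP by (simp add: mult.commute)
qed

lemma Qx_lsh: "Qx (lsh U V) = Q U * Q V"
proof (induction U V rule: lsh.induct)
  case (1 V) then show ?case by (simp add: Qx_single sb_one)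
next
  case (2 a U) then show ?case by (simp add: Qx_single sb_one)
next
  case (3 a U b V)
  define x where "x = \<phi> a * Q U"
  define y where "y = \<phi> b * Q V"
  have "Qx (lsh (a # U) (b # V)) = P (\<phi> a * (Q U * P y)) + P (\<phi> b * (P x * Q V)) - P (\<phi> a * \<phi> b * P (Q U * Q V))"
    using 3 by (simp add: Qx_add Qx_diff Qx_lcons phi_mult phi_one x_def y_def)
  also have "\<dots> = P (P x * y + x * P y) - P (x * P 1 * y)"
    unfolding PQ x_def y_def by (simp add: P_add algebra_simps)
  also have "\<dots> = Q (a # U) * Q (b # V)"
    unfolding P_TD[symmetric] by (simp add: x_def y_def)
  finally show ?case .
qed

lemma Q_add: "Q (xs @ (a + b) # ys) = Q (xs @ a # ys) + Q (xs @ b # ys)"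
  by (induction xs) (simp_all add: phi_add distrib_left distrib_right P_add)

lemma Q_scale: "Q (xs @ sa k a # ys) = sb k (Q (xs @ a # ys))"
  by (induction xs) (simp_all add: phi_scale sb_mult[symmetric] sb_mult2 P_scale)

lemma psi_tword: "psi (tword (h # t)) = \<phi> h * Q t"
  by (simp add: tword_cons psi_single sb_one)

lemma psi_rel: "x \<in> tp_rel sa \<Longrightarrow> psi x = 0"
proof (induction rule: tp_rel.induct)
  case zero then show ?case using addh_zero[OF addh_psi] .
next
  case (add x y) then show ?case by (simp add: psi_add)
next
  case (scale x c) then show ?case by (simp add: psi_scale sb_zero_right)
next
  case (gen_add xs a b ys)
  show ?case by (cases xs) (simp_all add: psi_diff psi_tword Q_add phi_add distrib_left distrib_right)
next
  case (gen_scale xs c a ys)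
  show ?case by (cases xs) (simp_all add: psi_diff psi_tword psi_scale Q_scale phi_scale sb_mult[symmetric] sb_mult2)
qed

lemma psi_one: "psi tp_one = 1"
  by (simp add: tp_one_def psi_single sb_one phi_one)

lemma psi_iA: "psi (iA a) = \<phi> a"
  by (simp add: iA_def psi_single sb_one)

lemma psi_PA: "psi (PA x) = P (psi x)"
  by (rule lin_eq[where f="\<lambda>x. psi (PA x)" and g="\<lambda>x. P (psi x)"])
     (simp_all add: addh_def psi_add PA_add P_add psi_single phi_one P_scale)

lemma psi_mult_single: "psi (tp_mult (sg (a, U) c) (sg (b, V) d)) = psi (sg (a, U) c) * psi (sg (b, V) d)"
  by (simp add: tp_mult_single psi_scale psi_tcons Qx_lsh psi_single phi_mult sb_mult[symmetric] sb_mult2 sb_scale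
       mult.commute mult.left_commute)

lemma psi_mult: "psi (tp_mult x y) = psi x * psi y"
proof (rule bilin_eq[where F="\<lambda>x y. psi (tp_mult x y)" and G="\<lambda>x y. psi x * psi y"])
  show "addh (\<lambda>x. psi (tp_mult x y))" for y by (simp add: addh_def tp_add1 psi_add)
  show "addh (\<lambda>y. psi (tp_mult x y))" for x by (simp add: addh_def tp_add2 psi_add)
  show "addh (\<lambda>x. psi x * psi y)" for y by (simp add: addh_def psi_add distrib_right)
  show "addh (\<lambda>y. psi x * psi y)" for x by (simp add: addh_def psi_add distrib_left)
qed (metis psi_mult_single prod.collapse)

lemma psi_hom: "tp_td_hom sa sb P psi"
  unfolding tp_td_hom_def
  by (simp add: psi_add psi_scale psi_rel psi_one psi_mult psi_PA)

lemma unique_single: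
  assumes h: "tp_td_hom sa sb P f" and i: "\<forall>a. f (iA a) = \<phi> a"
  shows "f (sg (a, U) 1) = \<phi> a * Q U"
proof (induction U arbitrary: a)
  case Nil then show ?case using i by (simp add: iA_def)
next
  case (Cons c U)
  have e: "sg (a, c # U) 1 = tp_mult (iA a) (PA (sg (c, U) 1))"
    by (simp add: iA_def tp_mult_single)
  have "f (tp_mult (iA a) (PA (sg (c, U) 1))) = f (iA a) * P (f (sg (c, U) 1))"
    using h by (simp add: tp_td_hom_def del: PA_single)
  then show ?case unfolding e using i Cons by simp
qed

lemma unique_single2:
  assumes h: "tp_td_hom sa sb P f" and i: "\<forall>a. f (iA a) = \<phi> a"
  shows "f (sg (a, U) k) = psi (sg (a, U) k)"
proof -
  have "f (sg (a, U) k) = sb k (f (sg (a, U) 1))"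
  proof -
    have "f (pm_scale k (sg (a, U) 1)) = sb k (f (sg (a, U) 1))"
      using h by (simp only: tp_td_hom_def)
    then show ?thesis by simp
  qed
  then show ?thesis
    using unique_single[OF h i] by (simp add: psi_single)
qed

lemma unique:
  assumes h: "tp_td_hom sa sb P f" and i: "\<forall>a. f (iA a) = \<phi> a"
  shows "f = psi"
proof
  fix x
  have af: "addh f" using h by (simp add: tp_td_hom_def addh_def)
  show "f x = psi x"
    apply (rule lin_eq[OF af addh_psi])
    subgoal for u c using unique_single2[OF h i, of "fst u" "snd u" c] by simp
    done
qed

end



theorem theorem4p8:
  fixes sa :: "'k::field_char_0 \<Rightarrow> 'a::comm_ring_1 \<Rightarrow> 'a"
  assumes "kalg sa"
  shows "tp_is_comm_td sa \<and>
    (\<forall>(sb :: 'k \<Rightarrow> 'b::comm_ring_1 \<Rightarrow> 'b) P \<phi>.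
       kalg sb \<longrightarrow> td_alg sb P \<longrightarrow> ualg_hom sa sb \<phi> \<longrightarrow>
       (\<exists>!\<psi>. tp_td_hom sa sb P \<psi> \<and> (\<forall>a. \<psi> (iA a) = \<phi> a)))"
proof
  have ks: "\<And>k a c. sa k a * c = sa k (a * c)" using assms by (simp add: kalg_def)
  have iA_tw: "iA x = tword [x]" for x :: 'a
    by (simp add: iA_def tword_cons)
  show "tp_is_comm_td sa"
    unfolding tp_is_comm_td_def tp_eq_def
  proof (intro conjI allI impI)
    show "tp_mult x y \<in> tp_rel sa" if "x \<in> tp_rel sa" for x y :: "'a \<times> 'a list \<Rightarrow>\<^sub>0 'k"
      by (rule tp_rel_ideal[OF ks that])
    show "PA x \<in> tp_rel sa" if "x \<in> tp_rel sa" for x :: "'a \<times> 'a list \<Rightarrow>\<^sub>0 'k"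
      by (rule PA_rel[OF that])
    show "tp_mult (tp_mult x y) z - tp_mult x (tp_mult y z) \<in> tp_rel sa" for x y z :: "'a \<times> 'a list \<Rightarrow>\<^sub>0 'k"
      by (simp add: tp_assoc tp_rel.zero)
    show "tp_mult x y - tp_mult y x \<in> tp_rel sa" for x y :: "'a \<times> 'a list \<Rightarrow>\<^sub>0 'k"
      using tp_comm[of x y] by (simp add: tp_rel.zero)
    show "tp_mult tp_one x - x \<in> tp_rel sa" for x :: "'a \<times> 'a list \<Rightarrow>\<^sub>0 'k"
      by (simp add: tp_unit tp_rel.zero)
    show "tp_mult (PA x) (PA y) - (PA (tp_mult (PA x) y + tp_mult x (PA y)) - PA (tp_mult (tp_mult x (PA tp_one)) y)) \<in> tp_rel sa"
      for x y :: "'a \<times> 'a list \<Rightarrow>\<^sub>0 'k"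
      using tp_TD[of x y] by (simp add: tp_rel.zero)
    show "(iA (a + b) :: 'a \<times> 'a list \<Rightarrow>\<^sub>0 'k) - (iA a + iA b) \<in> tp_rel sa" for a b
      using tp_rel.gen_add[where xs="[]" and ys="[]" and a=a and b=b and s=sa]
      by (simp add: iA_tw diff_diff_eq)
    show "iA (sa c a) - pm_scale c (iA a) \<in> tp_rel sa" for c a
      using tp_rel.gen_scale[where xs="[]" and ys="[]" and a=a and c=c and s=sa]
      by (simp add: iA_tw)
    show "(iA (a * b) :: 'a \<times> 'a list \<Rightarrow>\<^sub>0 'k) - tp_mult (iA a) (iA b) \<in> tp_rel sa" for a b
      by (simp add: iA_def tp_mult_single tp_rel.zero)
    show "(iA 1 :: 'a \<times> 'a list \<Rightarrow>\<^sub>0 'k) = tp_one"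
      by (simp add: iA_def tp_one_def)
  qed
  show "\<forall>(sb :: 'k \<Rightarrow> 'b::comm_ring_1 \<Rightarrow> 'b) P \<phi>.
       kalg sb \<longrightarrow> td_alg sb P \<longrightarrow> ualg_hom sa sb \<phi> \<longrightarrow>
       (\<exists>!\<psi>. tp_td_hom sa sb P \<psi> \<and> (\<forall>a. \<psi> (iA a) = \<phi> a))"
  proof (intro allI impI)
    fix sb :: "'k \<Rightarrow> 'b::comm_ring_1 \<Rightarrow> 'b" and P \<phi>
    assume "kalg sb" "td_alg sb P" "ualg_hom sa sb \<phi>"
    then interpret psi_setup sa sb P \<phi> using assms by unfold_locales
    show "\<exists>!\<psi>. tp_td_hom sa sb P \<psi> \<and> (\<forall>a. \<psi> (iA a) = \<phi> a)"
    proof (rule ex1I[where a=psi])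
      show "tp_td_hom sa sb P psi \<and> (\<forall>a. psi (iA a) = \<phi> a)" by (simp add: psi_hom psi_iA)
      show "f = psi" if "tp_td_hom sa sb P f \<and> (\<forall>a. f (iA a) = \<phi> a)" for f
        using unique that by blast
    qed
  qed
qed


end
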